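(* Let $t$ be odd with $1\le t\le k-1$, let $N$ be a positive multiple of $2^t$, $\lambda=N/2^t$, and let $p_{\max}$ be an integer with $\lambda/2^{k-t}<p_{\max}\le\lambda$. Then none of $R_1,\dots,R_k$ belongs to $G(k,2,t)^{\rm LP}$.
   Context: Variables $x_z$ are indexed by $z\in\{-1,1\}^k$. The LP relaxation of ILP (OA) for $s=2$ is: minimize $\sum_zx_z$ s.t. for each $t$-subset $J\subseteq\{1,\dots,k\}$ and each $u\in\{-1,1\}^J$, $\sum_{z:\ z_j=u_j\ \forall j\in J}x_z=\lambda$, and $0\le x_z\le p_{\max}$. With feasible set $\mathcal F$, $G(k,2,t)^{\rm LP}$ is the set of permutations $\pi$ of $\{-1,1\}^k$ with $\pi(x)\in\mathcal F$ and equal objective value for all $x\in\mathcal F$, where $\pi(x)_{\pi(z)}=x_z$. For $i\in\{1,\dots,k\}$, $R_i$ is the permutation of $\{-1,1\}^k$ given by $R_i(z_1,\dots,z_k)=(z_1z_i,\dots,z_{i-1}z_i,z_i,z_{i+1}z_i,\dots,z_kz_i)$. *)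

theory Defs
  imports Complex_Main
begin

text \<open>Points of the cube {-1,1}^k are lists of length k with entries in {-1,1};
  coordinate j (1-based, 1 <= j <= k) of z is z ! (j - 1).\<close>

definition cube :: "nat \<Rightarrow> int list set" where
  "cube k = {z. length z = k \<and> set z \<subseteq> {-1, 1}}"

definition lp_feasible :: "nat \<Rightarrow> nat \<Rightarrow> real \<Rightarrow> real \<Rightarrow> (int list \<Rightarrow> real) set" where
  "lp_feasible k t lam pmax =
     {x. (\<forall>z. z \<notin> cube k \<longrightarrow> x z = 0)
       \<and> (\<forall>J u. J \<subseteq> {1..k} \<longrightarrow> card J = t \<longrightarrow> (\<forall>j\<in>J. u j \<in> {-1, 1::int}) \<longrightarrow>
              (\<Sum>z\<in>{z \<in> cube k. \<forall>j\<in>J. z ! (j - 1) = u j}. x z) = lam)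
       \<and> (\<forall>z\<in>cube k. 0 \<le> x z \<and> x z \<le> pmax)}"

definition lp_obj :: "nat \<Rightarrow> (int list \<Rightarrow> real) \<Rightarrow> real" where
  "lp_obj k x = (\<Sum>z\<in>cube k. x z)"

definition perm_act :: "nat \<Rightarrow> (int list \<Rightarrow> int list) \<Rightarrow> (int list \<Rightarrow> real) \<Rightarrow> (int list \<Rightarrow> real)" where
  "perm_act k \<pi> x = (\<lambda>w. if w \<in> cube k then x (inv_into (cube k) \<pi> w) else 0)"

text \<open>G(k,2,t)^LP (a permutation is identified by its action on the cube).\<close>
definition G_LP :: "nat \<Rightarrow> nat \<Rightarrow> real \<Rightarrow> real \<Rightarrow> (int list \<Rightarrow> int list) set" where
  "G_LP k t lam pmax =
     {\<pi>. bij_betw \<pi> (cube k) (cube k) \<and>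
          (\<forall>x\<in>lp_feasible k t lam pmax.
              perm_act k \<pi> x \<in> lp_feasible k t lam pmax \<and>
              lp_obj k (perm_act k \<pi> x) = lp_obj k x)}"

text \<open>R_i (1-based i): z_j \<mapsto> z_j z_i for j \<noteq> i, and z_i unchanged.\<close>
definition R :: "nat \<Rightarrow> int list \<Rightarrow> int list" where
  "R i z = (map (\<lambda>a. a * z ! (i - 1)) z)[i - 1 := z ! (i - 1)]"

end

theory Submission imports Defs begin


lemma card_slice:
  "J \<subseteq> {1..k} \<Longrightarrow> (\<forall>j\<in>J. u j \<in> {-1,1::int}) \<Longrightarrow>
   card {z \<in> cube k. \<forall>j\<in>J. z!(j-1) = u j} = 2^(k - card J)"
proof (induction k arbitrary: J)
  case 0
  then have "J = {}" by auto
  moreover have "cube 0 = {[]}" by (auto simp: cube_def)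
  ultimately show ?case by simp
next
  case (Suc k)
  define C where "C = (if Suc k \<in> J then {u (Suc k)} else {-1,1::int})"
  define J' where "J' = J - {Suc k}"
  have J': "J' \<subseteq> {1..k}" using Suc.prems(1) by (auto simp: J'_def)
  have eq: "{z \<in> cube (Suc k). \<forall>j\<in>J. z!(j-1) = u j}
     = (\<lambda>(y,c). y@[c]) ` ({y \<in> cube k. \<forall>j\<in>J'. y!(j-1) = u j} \<times> C)"
  proof
    show "{z \<in> cube (Suc k). \<forall>j\<in>J. z!(j-1) = u j}
     \<subseteq> (\<lambda>(y,c). y@[c]) ` ({y \<in> cube k. \<forall>j\<in>J'. y!(j-1) = u j} \<times> C)"
    proof
      fix z assume z: "z \<in> {z \<in> cube (Suc k). \<forall>j\<in>J. z!(j-1) = u j}"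
      then have len: "length z = Suc k" and sz: "set z \<subseteq> {-1,1}" by (auto simp: cube_def)
      then have "z \<noteq> []" by auto
      then have zz: "z = butlast z @ [last z]" by simp
      have ly: "length (butlast z) = k" using len by simp
      have "butlast z \<in> cube k" using ly sz in_set_butlastD unfolding cube_def by fastforce
      moreover have "\<forall>j\<in>J'. butlast z!(j-1) = u j"
      proof
        fix j assume j: "j \<in> J'"
        have "j \<in> {1..k}" using j J' by blast
        then have "j - 1 < k" "j \<in> J" using j by (auto simp: J'_def)
        then show "butlast z!(j-1) = u j" using z zz ly
          by (simp add: nth_butlast)
      qed
      moreover have "last z \<in> C"
      proof (cases "Suc k \<in> J")
        case True
        then have "z ! k = u (Suc k)" using z by auto
        moreover have "z ! k = last z" using len \<open>z \<noteq> []\<close> by (simp add: last_conv_nth)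
        ultimately show ?thesis using True by (simp add: C_def)
      next
        case False
        have "last z \<in> set z" using \<open>z \<noteq> []\<close> by simp
        then show ?thesis using False sz by (auto simp: C_def)
      qed
      ultimately show "z \<in> (\<lambda>(y,c). y@[c]) ` ({y \<in> cube k. \<forall>j\<in>J'. y!(j-1) = u j} \<times> C)"
        using zz by (intro image_eqI[of _ _ "(butlast z, last z)"]) auto
    qed
  next
    show "(\<lambda>(y,c). y@[c]) ` ({y \<in> cube k. \<forall>j\<in>J'. y!(j-1) = u j} \<times> C)
       \<subseteq> {z \<in> cube (Suc k). \<forall>j\<in>J. z!(j-1) = u j}"
    proof
      fix z assume "z \<in> (\<lambda>(y,c). y@[c]) ` ({y \<in> cube k. \<forall>j\<in>J'. y!(j-1) = u j} \<times> C)"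
      then obtain y c where z: "z = y @ [c]" and y: "y \<in> cube k" and yJ: "\<forall>j\<in>J'. y!(j-1) = u j"
        and c: "c \<in> C" by auto
      have cC: "c \<in> {-1,1}" using c Suc.prems(2) by (auto simp: C_def split: if_splits)
      have ly: "length y = k" using y by (simp add: cube_def)
      have "z \<in> cube (Suc k)" using y cC z by (auto simp: cube_def)
      moreover have "\<forall>j\<in>J. z!(j-1) = u j"
      proof
        fix j assume j: "j \<in> J"
        show "z!(j-1) = u j"
        proof (cases "j = Suc k")
          case True
          then show ?thesis using c j ly z by (simp add: C_def nth_append)
        next
          case False
          have "j \<in> {1..Suc k}" using j Suc.prems(1) by blast
          then have "j - 1 < k" "j \<in> J'" using j False by (auto simp: J'_def)
          then show ?thesis using yJ z ly by (simp add: nth_append)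
        qed
      qed
      ultimately show "z \<in> {z \<in> cube (Suc k). \<forall>j\<in>J. z!(j-1) = u j}" by simp
    qed
  qed
  have inj: "inj_on (\<lambda>(y,c). y@[c]) ({y \<in> cube k. \<forall>j\<in>J'. y!(j-1) = u j} \<times> (C::int set))"
    by (auto simp: inj_on_def)
  have IH: "card {y \<in> cube k. \<forall>j\<in>J'. y!(j-1) = u j} = 2^(k - card J')"
    using Suc.IH[OF J'] Suc.prems(2) by (auto simp: J'_def)
  have fJ: "finite J" using Suc.prems(1) finite_subset by blast
  show ?case
  proof (cases "Suc k \<in> J")
    case True
    then have "card J' = card J - 1" "card J \<ge> 1" using fJ by (auto simp: J'_def card_gt_0_iff Suc_le_eq)
    then show ?thesis using True eq IH inj
      by (simp add: card_image card_cartesian_product C_def)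
  next
    case False
    then have "J' = J" by (auto simp: J'_def)
    moreover have "J \<subseteq> {1..k}" using False Suc.prems(1) by (auto simp: le_Suc_eq subset_iff)
    then have "card J \<le> k" using card_mono[of "{1..k}" J] by simp
    ultimately show ?thesis using False eq IH inj
      by (simp add: card_image card_cartesian_product C_def Suc_diff_le)
  qed
qed


definition chi :: "nat set \<Rightarrow> int list \<Rightarrow> int" where
  "chi S z = (\<Prod>j\<in>S. z!(j-1))"

lemma cube_nth: "z \<in> cube k \<Longrightarrow> n < k \<Longrightarrow> z!n \<in> {-1,1}"
  unfolding cube_def by (auto dest!: nth_mem)

lemma cube_sq: "z \<in> cube k \<Longrightarrow> n < k \<Longrightarrow> z!n * z!n = 1"
  using cube_nth by fastforce

lemma prod_abs1: "finite S \<Longrightarrow> (\<forall>j\<in>S. \<bar>g j\<bar> = (1::int)) \<Longrightarrow> \<bar>prod g S\<bar> = 1"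
  by (induction S rule: finite_induct) (auto simp: abs_mult)

lemma chi_abs: assumes "S \<subseteq> {1..k}" "z \<in> cube k" shows "\<bar>chi S z\<bar> = 1"
  unfolding chi_def
proof (rule prod_abs1)
  show "finite S" using assms finite_subset by blast
  show "\<forall>j\<in>S. \<bar>z!(j-1)\<bar> = 1"
  proof
    fix j assume "j \<in> S"
    then have "j \<in> {1..k}" using assms by blast
    then have "z!(j-1) \<in> {-1,1}" using cube_nth[of z k "j-1"] assms by auto
    then show "\<bar>z!(j-1)\<bar> = 1" by auto
  qed
qed

lemma sum_chi_zero:
  assumes S: "finite S" "S \<subseteq> {1..k}" and m: "m \<in> S" "m \<notin> J" and J: "J \<subseteq> {1..k}"
  shows "(\<Sum>z\<in>{z \<in> cube k. \<forall>j\<in>J. z!(j-1) = u j}. real_of_int (chi S z)) = 0"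
proof -
  define A where "A = {z \<in> cube k. \<forall>j\<in>J. z!(j-1) = u j}"
  define \<sigma> where "\<sigma> z = z[m-1 := - z!(m-1)]" for z :: "int list"
  have "m \<in> {1..k}" using S m by blast
  then have mk: "m - 1 < k" "1 \<le> m" by auto
  have inv: "\<sigma> (\<sigma> z) = z" if "z \<in> A" for z
    using that mk by (auto simp: \<sigma>_def A_def cube_def)
  have inA: "\<sigma> z \<in> A" if z: "z \<in> A" for z
  proof -
    have "length (\<sigma> z) = k" using z by (simp add: \<sigma>_def A_def cube_def)
    moreover have "- z!(m-1) \<in> {-1,1}" using cube_nth[of z k "m-1"] z mk by (auto simp: A_def)
    then have "set (\<sigma> z) \<subseteq> {-1,1}" using z set_update_subset_insert[of z "m-1" "- z!(m-1)"]
      by (auto simp: \<sigma>_def A_def cube_def)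
    moreover have "\<forall>j\<in>J. \<sigma> z!(j-1) = u j"
    proof
      fix j assume j: "j \<in> J"
      then have "j \<in> {1..k}" using J by blast
      then have "1 \<le> j" by simp
      moreover have "j \<noteq> m" using m j by auto
      ultimately have "j - 1 \<noteq> m - 1" using mk by arith
      then show "\<sigma> z!(j-1) = u j" using z j by (simp add: \<sigma>_def A_def)
    qed
    ultimately show ?thesis by (simp add: A_def cube_def)
  qed
  have neg: "chi S (\<sigma> z) = - chi S z" if z: "z \<in> A" for z
  proof -
    have lz: "length z = k" using z by (simp add: A_def cube_def)
    have "chi S (\<sigma> z) = \<sigma> z!(m-1) * (\<Prod>j\<in>S-{m}. \<sigma> z!(j-1))"
      unfolding chi_def using S m by (simp add: prod.remove)
    also have "(\<Prod>j\<in>S-{m}. \<sigma> z!(j-1)) = (\<Prod>j\<in>S-{m}. z!(j-1))"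
    proof (rule prod.cong)
      fix j assume j: "j \<in> S - {m}"
      then have "j \<in> {1..k}" using S by blast
      then have "1 \<le> j" by simp
      moreover have "j \<noteq> m" using j by simp
      ultimately have "j - 1 \<noteq> m - 1" using mk by arith
      then show "\<sigma> z!(j-1) = z!(j-1)" by (simp add: \<sigma>_def)
    qed simp
    also have "\<sigma> z!(m-1) = - z!(m-1)" using lz mk by (simp add: \<sigma>_def)
    finally show ?thesis unfolding chi_def using S m by (simp add: prod.remove)
  qed
  have "(\<Sum>z\<in>A. real_of_int (chi S (\<sigma> z))) = (\<Sum>z\<in>A. real_of_int (chi S z))"
    by (rule sum.reindex_bij_witness[where i=\<sigma> and j=\<sigma>]) (auto simp: inv inA)
  then have "(\<Sum>z\<in>A. real_of_int (chi S z)) = - (\<Sum>z\<in>A. real_of_int (chi S z))"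
    by (simp add: neg sum_negf)
  then show ?thesis unfolding A_def[symmetric] by simp
qed

lemma R_nth: "n < length z \<Longrightarrow> i - 1 < length z \<Longrightarrow>
   (R i z)!n = (if n = i - 1 then z!(i-1) else z!n * z!(i-1))"
  unfolding R_def by auto

lemma R_len: "length (R i z) = length z"
  unfolding R_def by simp

lemma R_cube: assumes "z \<in> cube k" "1 \<le> i" "i \<le> k" shows "R i z \<in> cube k"
proof -
  have lz: "length z = k" using assms by (simp add: cube_def)
  have "\<forall>n<k. (R i z)!n \<in> {-1,1}"
  proof (intro allI impI)
    fix n assume n: "n < k"
    have "z!n \<in> {-1,1}" "z!(i-1) \<in> {-1,1}" using cube_nth assms n by auto
    then show "(R i z)!n \<in> {-1,1}" using R_nth[of n z i] n lz assms by auto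
  qed
  then show ?thesis using lz R_len[of i z] unfolding cube_def
    by (auto simp: in_set_conv_nth)
qed

lemma R_R: assumes "z \<in> cube k" "1 \<le> i" "i \<le> k" shows "R i (R i z) = z"
proof (rule nth_equalityI)
  have lz: "length z = k" using assms by (simp add: cube_def)
  show "length (R i (R i z)) = length z" by (simp add: R_len)
  fix n assume "n < length (R i (R i z))"
  then have n: "n < k" by (simp add: R_len lz)
  have sq: "z!(i-1) * z!(i-1) = 1" using cube_sq assms by auto
  have i1: "i - 1 < k" using assms by simp
  have a: "(R i (R i z))!n = (if n = i - 1 then (R i z)!(i-1) else (R i z)!n * (R i z)!(i-1))"
    using R_nth[of n "R i z" i] n i1 lz by (simp add: R_len)
  have b: "(R i z)!n = (if n = i - 1 then z!(i-1) else z!n * z!(i-1))"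
    using R_nth[of n z i] n i1 lz by simp
  have c: "(R i z)!(i-1) = z!(i-1)"
    using R_nth[of "i-1" z i] i1 lz by simp
  show "R i (R i z) ! n = z ! n"
  proof (cases "n = i - 1")
    case True then show ?thesis using a c by simp
  next
    case False
    then have "R i (R i z) ! n = z!n * (z!(i-1) * z!(i-1))" using a b c by (simp add: mult.assoc)
    then show ?thesis using sq by simp
  qed
qed

lemma chi_R:
  assumes w: "w \<in> cube k" and i: "1 \<le> i" "i \<le> k" and T: "T \<subseteq> {1..k}" "i \<notin> T" "odd (card T)"
  shows "chi (insert i T) (R i w) = chi T w"
proof -
  have lw: "length w = k" using w by (simp add: cube_def)
  have fT: "finite T" using T finite_subset by blast
  have "chi (insert i T) (R i w) = (R i w)!(i-1) * (\<Prod>j\<in>T. (R i w)!(j-1))"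
    unfolding chi_def using fT T by simp
  also have "(\<Prod>j\<in>T. (R i w)!(j-1)) = (\<Prod>j\<in>T. w!(j-1) * w!(i-1))"
  proof (rule prod.cong)
    fix j assume j: "j \<in> T"
    then have "j \<in> {1..k}" using T by blast
    then have "1 \<le> j" "j \<le> k" by simp_all
    moreover have "j \<noteq> i" using T j by auto
    ultimately have "j - 1 \<noteq> i - 1" "j - 1 < k" using i by arith+
    then show "(R i w)!(j-1) = w!(j-1) * w!(i-1)" using R_nth[of "j-1" w i] lw i by auto
  qed simp
  also have "\<dots> = chi T w * w!(i-1) ^ card T" by (simp add: prod.distrib chi_def)
  also have "(R i w)!(i-1) = w!(i-1)" using R_nth[of "i-1" w i] lw i by auto
  finally have eq: "chi (insert i T) (R i w) = chi T w * w!(i-1) ^ Suc (card T)"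
    by (simp add: algebra_simps)
  have "even (Suc (card T))" using T(3) by simp
  then obtain q where q: "Suc (card T) = 2 * q" by (rule evenE)
  have "w!(i-1) ^ Suc (card T) = 1"
    unfolding q power_mult using cube_sq[OF w, of "i-1"] i by (simp add: power2_eq_square)
  then show ?thesis using eq by simp
qed


theorem lemma10:
  fixes k t N :: nat and pmax :: int
  assumes "odd t" and "1 \<le> t" and "t \<le> k - 1"
    and "N > 0" and "2 ^ t dvd N"
    and "real N / 2 ^ t / 2 ^ (k - t) < real_of_int pmax"
    and "real_of_int pmax \<le> real N / 2 ^ t"
  shows "\<forall>i\<in>{1..k}. R i \<notin> G_LP k t (real N / 2 ^ t) (real_of_int pmax)"
proof (intro ballI notI)
  fix i assume i: "i \<in> {1..k}" and G: "R i \<in> G_LP k t (real N / 2 ^ t) (real_of_int pmax)"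
  let ?lam = "real N / 2 ^ t"
  have i1: "1 \<le> i" "i \<le> k" using i by auto
  have "card ({1..k} - {i}) = k - 1" using i by simp
  then have "t \<le> card ({1..k} - {i})" using assms(3) by simp
  then obtain T where T: "T \<subseteq> {1..k} - {i}" "card T = t" "finite T"
    by (rule obtain_subset_with_card_n)
  have Tk: "T \<subseteq> {1..k}" and iT: "i \<notin> T" using T by auto
  define S where "S = insert i T"
  have S1: "finite S" using T(3) by (simp add: S_def)
  have S2: "S \<subseteq> {1..k}" using Tk i by (simp add: S_def)
  have S3: "card S = t + 1" using T(2,3) iT by (simp add: S_def)
  note S = S1 S2 S3
  define a where "a = ?lam / 2 ^ (k - t)"
  have a0: "a > 0" unfolding a_def using assms(4) by simp
  have apm: "a < real_of_int pmax" unfolding a_def using assms(6) .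
  define b where "b = min a (real_of_int pmax - a)"
  have b0: "b > 0" and ba: "b \<le> a" and bp: "a + b \<le> real_of_int pmax"
    using a0 apm by (auto simp: b_def)
  have lam_eq: "2 ^ (k - t) * a = ?lam" unfolding a_def by simp
  define x where "x z = (if z \<in> cube k then a + b * real_of_int (chi S z) else 0)" for z
  have feas: "x \<in> lp_feasible k t ?lam (real_of_int pmax)"
    unfolding lp_feasible_def
  proof (intro CollectI conjI allI impI ballI)
    fix z assume "z \<notin> cube k" then show "x z = 0" by (simp add: x_def)
  next
    fix J u assume J: "J \<subseteq> {1..k}" and cJ: "card J = t" and u: "\<forall>j\<in>J. u j \<in> {-1, 1::int}"
    have fJ: "finite J" using J finite_subset by blast
    have "\<not> S \<subseteq> J"
    proof
      assume "S \<subseteq> J"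
      then have "card S \<le> card J" by (rule card_mono[OF fJ])
      then show False using cJ S(3) by simp
    qed
    then obtain m where m: "m \<in> S" "m \<notin> J" by blast
    let ?A = "{z \<in> cube k. \<forall>j\<in>J. z ! (j - 1) = u j}"
    have "(\<Sum>z\<in>?A. x z) = (\<Sum>z\<in>?A. a + b * real_of_int (chi S z))"
      by (rule sum.cong[OF refl]) (simp add: x_def)
    also have "\<dots> = real (card ?A) * a + b * (\<Sum>z\<in>?A. real_of_int (chi S z))"
      by (simp add: sum.distrib sum_distrib_left)
    also have "(\<Sum>z\<in>?A. real_of_int (chi S z)) = 0"
      using sum_chi_zero[OF S(1) S(2) m J] .
    also have "card ?A = 2 ^ (k - t)" using card_slice[OF J u] cJ by simp
    finally show "(\<Sum>z\<in>?A. x z) = ?lam" using lam_eq by simp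
  next
    fix z assume z: "z \<in> cube k"
    have "\<bar>chi S z\<bar> = 1" using chi_abs[OF S(2) z] .
    then have "chi S z = 1 \<or> chi S z = -1" by auto
    moreover have "x z = a + b * real_of_int (chi S z)" using z by (simp add: x_def)
    ultimately have "x z = a + b \<or> x z = a - b" by auto
    then show "0 \<le> x z" "x z \<le> real_of_int pmax"
      using ba bp b0 by linarith+
  qed
  have "\<forall>x\<in>lp_feasible k t ?lam (real_of_int pmax). perm_act k (R i) x \<in> lp_feasible k t ?lam (real_of_int pmax)
     \<and> lp_obj k (perm_act k (R i) x) = lp_obj k x"
    using G unfolding G_LP_def by blast
  then have feas2: "perm_act k (R i) x \<in> lp_feasible k t ?lam (real_of_int pmax)"
    using feas by blast
  let ?A = "{z \<in> cube k. \<forall>j\<in>T. z ! (j - 1) = 1}"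
  have inj: "inj_on (R i) (cube k)"
  proof (rule inj_onI)
    fix p q assume p: "p \<in> cube k" and q: "q \<in> cube k" and e: "R i p = R i q"
    have "p = R i (R i p)" using R_R[OF p i1] by simp
    also have "\<dots> = R i (R i q)" using e by simp
    also have "\<dots> = q" using R_R[OF q i1] .
    finally show "p = q" .
  qed
  have val: "perm_act k (R i) x w = a + b" if w: "w \<in> ?A" for w
  proof -
    have wc: "w \<in> cube k" using w by simp
    have Rw: "R i w \<in> cube k" using R_cube[OF wc i1] .
    have "inv_into (cube k) (R i) w = R i w"
      by (rule inv_into_f_eq[OF inj Rw]) (rule R_R[OF wc i1])
    then have "perm_act k (R i) x w = a + b * real_of_int (chi S (R i w))"
      using wc Rw by (simp add: perm_act_def x_def)
    also have "chi S (R i w) = chi T w"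
      unfolding S_def using chi_R[OF wc i1 Tk iT] T(2) assms(1) by simp
    also have "chi T w = 1" unfolding chi_def using w by simp
    finally show ?thesis by simp
  qed
  have "(\<Sum>z\<in>?A. perm_act k (R i) x z) = (\<Sum>z\<in>?A. a + b)"
    by (rule sum.cong[OF refl]) (rule val)
  also have "\<dots> = real (card ?A) * (a + b)" by simp
  also have "card ?A = 2 ^ (k - t)"
    using card_slice[OF Tk, of "\<lambda>_. 1"] T(2) by simp
  finally have "(\<Sum>z\<in>?A. perm_act k (R i) x z) = 2 ^ (k - t) * (a + b)" by simp
  moreover have "\<forall>J u. J \<subseteq> {1..k} \<longrightarrow> card J = t \<longrightarrow> (\<forall>j\<in>J. u j \<in> {-1, 1::int}) \<longrightarrow>
              (\<Sum>z\<in>{z \<in> cube k. \<forall>j\<in>J. z ! (j - 1) = u j}. perm_act k (R i) x z) = ?lam"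
    using feas2 unfolding lp_feasible_def by blast
  then have "(\<Sum>z\<in>?A. perm_act k (R i) x z) = ?lam"
    using Tk T(2) by simp
  ultimately have "2 ^ (k - t) * (a + b) = 2 ^ (k - t) * a" using lam_eq by simp
  then show False using b0 by simp
qed

end
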